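(* Let $M,N:\Sigma\to cb(X)$ be multimeasures. Then $M$ is uniformly scalarly absolutely continuous with respect to $N$ if and only if $M$ is uniformly scalarly dominated by $N$; and if $M$ is uniformly scalarly subordinated to $N$, then $M$ is uniformly scalarly dominated by (hence uniformly scalarly absolutely continuous with respect to) $N$.
   Context: $(\Omega,\Sigma)$ is a measurable space and $X$ is a Hausdorff locally convex space with dual $X'$. $cb(X)$ is the family of nonempty closed bounded convex subsets of $X$; $s(x',C)=\sup\{\langle x',x\rangle:x\in C\}$. A multimeasure $M:\Sigma\to cb(X)$ is a map such that every $s(x',M(\cdot))$, $x'\in X'$, is a (finite, real-valued) countably additive measure. $-N$ denotes $E\mapsto\{-x:x\in N(E)\}$, so $s(x',-N(E))=s(-x',N(E))$. For a finite signed measure $\nu$, $|\nu|$ is its variation. $\Sigma_E=\{F\in\Sigma:F\subseteq E\}$, $A^c=\Omega\setminus A$, and for $S\subseteq\mathbb R$, $\overline{\mathrm{aco}}\,S$ is the closed absolutely convex hull. Quantifiers "for all $x',y'$" range over $X'$ (equivalently, by positive homogeneity of support functions, over the unit ball $B_{X'}$ when $X$ is normed). (usac) $M$ is uniformly scalarly absolutely continuous w.r.t. $N$ if there exists $A\in\Sigma$ such that for every $\varepsilon>0$ there is $\delta>0$ such that for all $\alpha,\beta\in\mathbb R$, all $x',y'$ and all $E\in\Sigma$: if $|\alpha s(x',N)+\beta s(y',N)|(E\cap A)+|\alpha s(x',-N)+\beta s(y',-N)|(E\cap A^c)\le\delta$ then $|\alpha s(x',M)+\beta s(y',M)|(E)\le\varepsilon$.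 (usd) $M$ is uniformly scalarly dominated by $N$ if there exist $c\in\mathbb R$ and $A\in\Sigma$ such that for all $\alpha,\beta,x',y',E$: $|\alpha s(x',M)+\beta s(y',M)|(E)\le c|\alpha s(x',N)+\beta s(y',N)|(E\cap A)+c|\alpha s(x',-N)+\beta s(y',-N)|(E\cap A^c)$. (uss) $M$ is uniformly scalarly subordinated to $N$ if there exist $d\ge0$ and $A\in\Sigma$ such that for all $\alpha,\beta,x',y',E$: $\alpha s(x',M(E))+\beta s(y',M(E))\in d\,\overline{\mathrm{aco}}\{\alpha s(x',N(F\cap A))+\beta s(y',N(F\cap A)):F\in\Sigma_E\}+d\,\overline{\mathrm{aco}}\{\alpha s(x',-N(F\cap A^c))+\beta s(y',-N(F\cap A^c)):F\in\Sigma_E\}$. *)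

theory Defs
  imports "HOL-Analysis.Analysis"
begin

text \<open>Hausdorff locally convex real topological vector space structure on the type 'x
  (Hausdorff-ness comes from the class t2_space).\<close>
definition lcs :: "'x::{real_vector,t2_space} itself \<Rightarrow> bool" where
  "lcs _ \<longleftrightarrow>
     continuous_on UNIV (\<lambda>(x::'x, y). x + y) \<and>
     continuous_on UNIV (\<lambda>(c::real, x::'x). c *\<^sub>R x) \<and>
     (\<forall>U::'x set. open U \<and> 0 \<in> U \<longrightarrow> (\<exists>V. open V \<and> convex V \<and> 0 \<in> V \<and> V \<subseteq> U))"

definition dual :: "('x::{real_vector,topological_space} \<Rightarrow> real) set" where
  "dual = {f. linear f \<and> continuous_on UNIV f}"

definition tvs_bounded :: "'x::{real_vector,topological_space} set \<Rightarrow> bool" where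
  "tvs_bounded C \<longleftrightarrow> (\<forall>U. open U \<and> 0 \<in> U \<longrightarrow>
      (\<exists>t>0. \<forall>r\<ge>t. C \<subseteq> (\<lambda>x. r *\<^sub>R x) ` U))"

definition cb :: "'x::{real_vector,topological_space} set set" where
  "cb = {C. C \<noteq> {} \<and> closed C \<and> tvs_bounded C \<and> convex C}"

definition supp :: "('x \<Rightarrow> real) \<Rightarrow> 'x set \<Rightarrow> real" where
  "supp x' C = Sup (x' ` C)"

definition signed_measure :: "'a measure \<Rightarrow> ('a set \<Rightarrow> real) \<Rightarrow> bool" where
  "signed_measure \<Omega> \<nu> \<longleftrightarrow>
     (\<forall>A::nat \<Rightarrow> 'a set. range A \<subseteq> sets \<Omega> \<longrightarrow> disjoint_family A \<longrightarrow>
        (\<lambda>n. \<nu> (A n)) sums \<nu> (\<Union>n. A n))"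

definition variation :: "'a measure \<Rightarrow> ('a set \<Rightarrow> real) \<Rightarrow> 'a set \<Rightarrow> real" where
  "variation \<Omega> \<nu> E = Sup {(\<Sum>F\<in>P. \<bar>\<nu> F\<bar>) | P. finite P \<and> disjoint P \<and> P \<subseteq> sets \<Omega> \<and> \<Union>P = E}"

definition multimeasure :: "'a measure \<Rightarrow> ('a set \<Rightarrow> 'x::{real_vector,topological_space} set) \<Rightarrow> bool" where
  "multimeasure \<Omega> M \<longleftrightarrow> (\<forall>E\<in>sets \<Omega>. M E \<in> cb) \<and>
     (\<forall>x'\<in>dual. signed_measure \<Omega> (\<lambda>E. supp x' (M E)))"

definition mneg :: "('a set \<Rightarrow> 'x::real_vector set) \<Rightarrow> 'a set \<Rightarrow> 'x set" where
  "mneg N E = uminus ` N E"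

definition caco :: "real set \<Rightarrow> real set" where
  "caco S = closure (convex hull {c * x | c x. \<bar>c\<bar> \<le> 1 \<and> x \<in> S})"

definition lc :: "real \<Rightarrow> ('x \<Rightarrow> real) \<Rightarrow> real \<Rightarrow> ('x \<Rightarrow> real) \<Rightarrow> ('a set \<Rightarrow> 'x set) \<Rightarrow> 'a set \<Rightarrow> real" where
  "lc \<alpha> x' \<beta> y' M E = \<alpha> * supp x' (M E) + \<beta> * supp y' (M E)"

definition usac :: "'a measure \<Rightarrow> ('a set \<Rightarrow> 'x::{real_vector,topological_space} set) \<Rightarrow> ('a set \<Rightarrow> 'x set) \<Rightarrow> bool" where
  "usac \<Omega> M N \<longleftrightarrow> (\<exists>A\<in>sets \<Omega>. \<forall>\<epsilon>>0. \<exists>\<delta>>0. \<forall>\<alpha> \<beta> x' y' E.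
      x' \<in> dual \<longrightarrow> y' \<in> dual \<longrightarrow> E \<in> sets \<Omega> \<longrightarrow>
      variation \<Omega> (lc \<alpha> x' \<beta> y' N) (E \<inter> A) + variation \<Omega> (lc \<alpha> x' \<beta> y' (mneg N)) (E \<inter> (space \<Omega> - A)) \<le> \<delta>
      \<longrightarrow> variation \<Omega> (lc \<alpha> x' \<beta> y' M) E \<le> \<epsilon>)"

definition usd :: "'a measure \<Rightarrow> ('a set \<Rightarrow> 'x::{real_vector,topological_space} set) \<Rightarrow> ('a set \<Rightarrow> 'x set) \<Rightarrow> bool" where
  "usd \<Omega> M N \<longleftrightarrow> (\<exists>c::real. \<exists>A\<in>sets \<Omega>. \<forall>\<alpha> \<beta> x' y' E.
      x' \<in> dual \<longrightarrow> y' \<in> dual \<longrightarrow> E \<in> sets \<Omega> \<longrightarrow>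
      variation \<Omega> (lc \<alpha> x' \<beta> y' M) E
        \<le> c * variation \<Omega> (lc \<alpha> x' \<beta> y' N) (E \<inter> A) + c * variation \<Omega> (lc \<alpha> x' \<beta> y' (mneg N)) (E \<inter> (space \<Omega> - A)))"

definition uss :: "'a measure \<Rightarrow> ('a set \<Rightarrow> 'x::{real_vector,topological_space} set) \<Rightarrow> ('a set \<Rightarrow> 'x set) \<Rightarrow> bool" where
  "uss \<Omega> M N \<longleftrightarrow> (\<exists>d::real\<ge>0. \<exists>A\<in>sets \<Omega>. \<forall>\<alpha> \<beta> x' y' E.
      x' \<in> dual \<longrightarrow> y' \<in> dual \<longrightarrow> E \<in> sets \<Omega> \<longrightarrow>
      lc \<alpha> x' \<beta> y' M E \<in>
        {d * u + d * v | u v.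
           u \<in> caco {lc \<alpha> x' \<beta> y' N (F \<inter> A) | F. F \<in> sets \<Omega> \<and> F \<subseteq> E} \<and>
           v \<in> caco {lc \<alpha> x' \<beta> y' (mneg N) (F \<inter> (space \<Omega> - A)) | F. F \<in> sets \<Omega> \<and> F \<subseteq> E}})"

end

theory Submission
  imports Defs
begin

definition varset :: "'a measure \<Rightarrow> ('a set \<Rightarrow> real) \<Rightarrow> 'a set \<Rightarrow> real set" where
  "varset \<Omega> \<nu> E = {(\<Sum>F\<in>P. \<bar>\<nu> F\<bar>) | P. finite P \<and> disjoint P \<and> P \<subseteq> sets \<Omega> \<and> \<Union>P = E}"

lemma variation_varset: "variation \<Omega> \<nu> E = Sup (varset \<Omega> \<nu> E)"
  unfolding variation_def varset_def by simp

lemma sm_empty: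
  assumes "signed_measure \<Omega> \<mu>" shows "\<mu> {} = 0"
proof -
  have "(\<lambda>n. \<mu> ((\<lambda>n. {}) n)) sums \<mu> (\<Union>n. (\<lambda>n. {}) n)"
    using assms unfolding signed_measure_def by (auto simp: disjoint_family_on_def)
  then have "summable (\<lambda>n. \<mu> {})" by (simp add: sums_summable)
  then have "(\<lambda>n. \<mu> {}) \<longlonglongrightarrow> 0" by (rule summable_LIMSEQ_zero)
  then show ?thesis by (simp add: LIMSEQ_const_iff)
qed

lemma sm_union:
  assumes sm: "signed_measure \<Omega> \<mu>" and A: "A \<in> sets \<Omega>" and B: "B \<in> sets \<Omega>" and d: "A \<inter> B = {}"
  shows "\<mu> (A \<union> B) = \<mu> A + \<mu> B"
proof -
  define f where "f n = (if n = 0 then A else if n = 1 then B else {})" for n :: nat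
  have r: "range f \<subseteq> sets \<Omega>" using A B by (auto simp: f_def)
  have df: "disjoint_family f" using d unfolding disjoint_family_on_def f_def by auto
  have U: "(\<Union>n. f n) = A \<union> B"
  proof
    show "(\<Union>n. f n) \<subseteq> A \<union> B" by (auto simp: f_def split: if_splits)
    show "A \<union> B \<subseteq> (\<Union>n. f n)"
    proof
      fix x assume "x \<in> A \<union> B"
      then show "x \<in> (\<Union>n. f n)"
      proof
        assume "x \<in> A" then show ?thesis by (intro UN_I[of 0]) (auto simp: f_def)
      next
        assume "x \<in> B" then show ?thesis by (intro UN_I[of 1]) (auto simp: f_def)
      qed
    qed
  qed
  have s1: "(\<lambda>n. \<mu> (f n)) sums \<mu> (A \<union> B)"
    using sm r df U unfolding signed_measure_def by metis
  have "(\<lambda>n. \<mu> (f n)) sums (\<Sum>n\<in>{0,1}. \<mu> (f n))"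
    by (rule sums_finite) (auto simp: f_def sm_empty[OF sm])
  then have "(\<lambda>n. \<mu> (f n)) sums (\<mu> A + \<mu> B)" by (simp add: f_def)
  with s1 show ?thesis using sums_unique2 by blast
qed

lemma sm_fin:
  assumes sm: "signed_measure \<Omega> \<mu>"
  shows "finite Q \<Longrightarrow> disjoint Q \<Longrightarrow> Q \<subseteq> sets \<Omega> \<Longrightarrow> \<mu> (\<Union>Q) = (\<Sum>F\<in>Q. \<mu> F)"
proof (induction Q rule: finite_induct)
  case empty then show ?case by (simp add: sm_empty[OF sm])
next
  case (insert F Q)
  have dQ: "disjoint Q" and FG: "\<forall>G\<in>Q. G \<noteq> F \<longrightarrow> disjnt F G \<and> disjnt G F"
    using insert.prems(1) unfolding pairwise_insert by simp_all
  have FG2: "F \<inter> G = {}" if "G \<in> Q" for G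
  proof -
    have "G \<noteq> F" using that insert.hyps(2) by auto
    then have "disjnt F G" using FG that by simp
    then show ?thesis unfolding disjnt_def .
  qed
  have FQ: "F \<inter> \<Union>Q = {}" using FG2 by (simp add: Int_Union)
  have QS: "Q \<subseteq> sets \<Omega>" and FS: "F \<in> sets \<Omega>" using insert.prems(2) by simp_all
  have UQ: "\<Union>Q \<in> sets \<Omega>" using QS insert.hyps(1) by (rule sets.finite_Union[rotated])
  have "\<mu> (\<Union>(insert F Q)) = \<mu> (F \<union> \<Union>Q)" by simp
  also have "\<dots> = \<mu> F + \<mu> (\<Union>Q)" by (rule sm_union[OF sm FS UQ FQ])
  also have "\<mu> (\<Union>Q) = (\<Sum>G\<in>Q. \<mu> G)" by (rule insert.IH[OF dQ QS])
  also have "\<mu> F + (\<Sum>G\<in>Q. \<mu> G) = (\<Sum>G\<in>insert F Q. \<mu> G)"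
    using insert.hyps by (simp add: sum.insert)
  finally show ?case .
qed

lemma part_bound:
  assumes sm: "signed_measure \<Omega> \<mu>" and P: "finite P" "disjoint P" "P \<subseteq> sets \<Omega>"
    and K: "\<And>G. G \<in> sets \<Omega> \<Longrightarrow> G \<subseteq> \<Union>P \<Longrightarrow> \<bar>\<mu> G\<bar> \<le> K"
  shows "(\<Sum>F\<in>P. \<bar>\<mu> F\<bar>) \<le> 2 * K"
proof -
  define P1 where "P1 = {F\<in>P. \<mu> F \<ge> 0}"
  define P2 where "P2 = {F\<in>P. \<mu> F < 0}"
  have PU: "P = P1 \<union> P2" "P1 \<inter> P2 = {}" unfolding P1_def P2_def by auto
  have f1: "finite P1" "finite P2" using P(1) unfolding P1_def P2_def by auto
  have d1: "disjoint P1" "disjoint P2" using P(2) unfolding P1_def P2_def by (auto intro: pairwise_subset)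
  have s1: "P1 \<subseteq> sets \<Omega>" "P2 \<subseteq> sets \<Omega>" using P(3) unfolding P1_def P2_def by auto
  have "(\<Sum>F\<in>P. \<bar>\<mu> F\<bar>) = (\<Sum>F\<in>P1. \<bar>\<mu> F\<bar>) + (\<Sum>F\<in>P2. \<bar>\<mu> F\<bar>)"
    using PU f1 by (simp add: sum.union_disjoint)
  also have "(\<Sum>F\<in>P1. \<bar>\<mu> F\<bar>) = (\<Sum>F\<in>P1. \<mu> F)" by (rule sum.cong) (auto simp: P1_def)
  also have "(\<Sum>F\<in>P2. \<bar>\<mu> F\<bar>) = - (\<Sum>F\<in>P2. \<mu> F)"
    unfolding sum_negf[symmetric] by (rule sum.cong) (auto simp: P2_def)
  also have "(\<Sum>F\<in>P1. \<mu> F) = \<mu> (\<Union>P1)" using sm_fin[OF sm f1(1) d1(1) s1(1)] by simp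
  also have "(\<Sum>F\<in>P2. \<mu> F) = \<mu> (\<Union>P2)" using sm_fin[OF sm f1(2) d1(2) s1(2)] by simp
  also have "\<mu> (\<Union>P1) + - \<mu> (\<Union>P2) \<le> K + K"
  proof -
    have "\<Union>P1 \<in> sets \<Omega>" "\<Union>P2 \<in> sets \<Omega>" using f1 s1 by (auto intro: sets.finite_Union)
    moreover have "\<Union>P1 \<subseteq> \<Union>P" "\<Union>P2 \<subseteq> \<Union>P" using PU by auto
    ultimately have "\<bar>\<mu> (\<Union>P1)\<bar> \<le> K" "\<bar>\<mu> (\<Union>P2)\<bar> \<le> K" using K by auto
    then show ?thesis by linarith
  qed
  finally show ?thesis by simp
qed

lemma sm_bounded:
  assumes sm: "signed_measure \<Omega> \<mu>"
  shows "\<exists>B. \<forall>G\<in>sets \<Omega>. \<bar>\<mu> G\<bar> \<le> B"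
proof (rule ccontr)
  assume nb: "\<not> ?thesis"
  define bad where "bad G \<longleftrightarrow> G \<in> sets \<Omega> \<and> (\<forall>B. \<exists>H\<in>sets \<Omega>. H \<subseteq> G \<and> \<bar>\<mu> H\<bar> > B)" for G
  have bad0: "bad (space \<Omega>)"
  proof -
    have "\<exists>H\<in>sets \<Omega>. H \<subseteq> space \<Omega> \<and> \<bar>\<mu> H\<bar> > B" for B
    proof -
      obtain G where "G \<in> sets \<Omega>" "\<bar>\<mu> G\<bar> > B" using nb by (meson not_le)
      then show ?thesis using sets.sets_into_space by blast
    qed
    then show ?thesis unfolding bad_def by simp
  qed
  have step: "\<exists>p. bad (fst p) \<and> snd p \<in> sets \<Omega> \<and> fst p \<subseteq> G \<and> snd p \<subseteq> G \<and> fst p \<inter> snd p = {} \<and> 1 \<le> \<bar>\<mu> (snd p)\<bar>"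
    if bG: "bad G" for G
  proof -
    have G: "G \<in> sets \<Omega>" and bGa: "\<forall>B. \<exists>H\<in>sets \<Omega>. H \<subseteq> G \<and> \<bar>\<mu> H\<bar> > B"
      using bG unfolding bad_def by simp_all
    obtain H where H: "H \<in> sets \<Omega>" "H \<subseteq> G" "\<bar>\<mu> H\<bar> > \<bar>\<mu> G\<bar> + 1"
      using bGa[rule_format, of "\<bar>\<mu> G\<bar> + 1"] by blast
    have GH: "G - H \<in> sets \<Omega>" using G H by auto
    have "\<mu> G = \<mu> H + \<mu> (G - H)"
      using sm_union[OF sm H(1) GH] H(2) by (simp add: Un_absorb1 Un_Diff_cancel)
    then have m1: "1 \<le> \<bar>\<mu> (G - H)\<bar>" "1 \<le> \<bar>\<mu> H\<bar>" using H(3) by linarith+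
    have "bad H \<or> bad (G - H)"
    proof (rule ccontr)
      assume "\<not> (bad H \<or> bad (G - H))"
      then have "\<not> bad H" "\<not> bad (G - H)" by auto
      then have "\<exists>B1. \<forall>K\<in>sets \<Omega>. K \<subseteq> H \<longrightarrow> \<bar>\<mu> K\<bar> \<le> B1"
        "\<exists>B2. \<forall>K\<in>sets \<Omega>. K \<subseteq> G - H \<longrightarrow> \<bar>\<mu> K\<bar> \<le> B2"
        using H(1) GH unfolding bad_def by (simp_all add: not_less)
      then obtain B1 B2 where B1: "\<forall>K\<in>sets \<Omega>. K \<subseteq> H \<longrightarrow> \<bar>\<mu> K\<bar> \<le> B1"
        and B2: "\<forall>K\<in>sets \<Omega>. K \<subseteq> G - H \<longrightarrow> \<bar>\<mu> K\<bar> \<le> B2"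
        by (elim exE)
      obtain K where K: "K \<in> sets \<Omega>" "K \<subseteq> G" "\<bar>\<mu> K\<bar> > B1 + B2"
        using bGa[rule_format, of "B1 + B2"] by blast
      have KH: "K \<inter> H \<in> sets \<Omega>" "K - H \<in> sets \<Omega>" using K(1) H(1) by auto
      have "\<mu> K = \<mu> (K \<inter> H \<union> (K - H))" by (simp add: Int_Diff_Un)
      also have "\<dots> = \<mu> (K \<inter> H) + \<mu> (K - H)" by (rule sm_union[OF sm KH]) auto
      finally have "\<mu> K = \<mu> (K \<inter> H) + \<mu> (K - H)" .
      moreover have "\<bar>\<mu> (K \<inter> H)\<bar> \<le> B1" using B1 KH(1) by blast
      moreover have "\<bar>\<mu> (K - H)\<bar> \<le> B2" using B2 KH(2) K(2) by blast
      ultimately show False using K(3) by linarith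
    qed
    then show ?thesis
    proof
      assume "bad H" then show ?thesis
        using GH H m1 by (intro exI[of _ "(H, G - H)"]) auto
    next
      assume "bad (G - H)" then show ?thesis
        using GH H m1 by (intro exI[of _ "(G - H, H)"]) auto
    qed
  qed
  define nxt where "nxt G = (SOME p. bad (fst p) \<and> snd p \<in> sets \<Omega> \<and> fst p \<subseteq> G \<and> snd p \<subseteq> G \<and> fst p \<inter> snd p = {} \<and> 1 \<le> \<bar>\<mu> (snd p)\<bar>)" for G
  have nxt: "bad (fst (nxt G)) \<and> snd (nxt G) \<in> sets \<Omega> \<and> fst (nxt G) \<subseteq> G \<and> snd (nxt G) \<subseteq> G \<and> fst (nxt G) \<inter> snd (nxt G) = {} \<and> 1 \<le> \<bar>\<mu> (snd (nxt G))\<bar>"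
    if "bad G" for G
    unfolding nxt_def using someI_ex[OF step[OF that]] .
  define g where "g = rec_nat (space \<Omega>) (\<lambda>_ G. fst (nxt G))"
  have g0: "g 0 = space \<Omega>" and gS: "g (Suc n) = fst (nxt (g n))" for n by (simp_all add: g_def)
  have bg: "bad (g n)" for n
  proof (induction n)
    case 0 show ?case using bad0 by (simp add: g0)
  next
    case (Suc n) show ?case using nxt[OF Suc.IH] by (simp add: gS)
  qed
  define D where "D n = snd (nxt (g n))" for n
  have Dp: "D n \<in> sets \<Omega>" "g (Suc n) \<subseteq> g n" "D n \<subseteq> g n" "g (Suc n) \<inter> D n = {}" "1 \<le> \<bar>\<mu> (D n)\<bar>" for n
    using nxt[OF bg[of n]] unfolding D_def gS by blast+
  have dec: "decseq g" using Dp(2) by (intro decseq_SucI) auto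
  have dis: "D n \<inter> D m = {}" if "n < m" for n m
  proof -
    have "D m \<subseteq> g (Suc n)" using Dp(3)[of m] dec that unfolding decseq_def
      by (meson Suc_leI subset_trans)
    then show ?thesis using Dp(4)[of n] by blast
  qed
  have "disjoint_family D" unfolding disjoint_family_on_def
    by (metis Int_commute dis linorder_neqE_nat)
  moreover have "range D \<subseteq> sets \<Omega>" using Dp(1) by auto
  ultimately have "(\<lambda>n. \<mu> (D n)) sums \<mu> (\<Union>n. D n)" using sm unfolding signed_measure_def by blast
  then have "(\<lambda>n. \<mu> (D n)) \<longlonglongrightarrow> 0" by (intro summable_LIMSEQ_zero sums_summable)
  from LIMSEQ_D[OF this, of 1] obtain no where "\<forall>n\<ge>no. norm (\<mu> (D n) - 0) < 1" by auto
  then show False using Dp(5)[of no] by auto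
qed


lemma var_props:
  assumes sm: "signed_measure \<Omega> \<mu>" and E: "E \<in> sets \<Omega>"
  shows "bdd_above (varset \<Omega> \<mu> E)" "varset \<Omega> \<mu> E \<noteq> {}" "\<bar>\<mu> E\<bar> \<in> varset \<Omega> \<mu> E"
proof -
  obtain B where B: "\<forall>G\<in>sets \<Omega>. \<bar>\<mu> G\<bar> \<le> B" using sm_bounded[OF sm] by blast
  have "s \<le> 2 * B" if sv: "s \<in> varset \<Omega> \<mu> E" for s
  proof -
    obtain P where P: "finite P" "disjoint P" "P \<subseteq> sets \<Omega>" "\<Union>P = E" and s: "s = (\<Sum>F\<in>P. \<bar>\<mu> F\<bar>)"
    proof -
      have "\<exists>P. s = (\<Sum>F\<in>P. \<bar>\<mu> F\<bar>) \<and> finite P \<and> disjoint P \<and> P \<subseteq> sets \<Omega> \<and> \<Union>P = E"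
        using sv unfolding varset_def by (simp only: mem_Collect_eq)
      then show ?thesis using that by (elim exE conjE) blast
    qed
    show ?thesis unfolding s by (rule part_bound[OF sm P(1-3)]) (use B in blast)
  qed
  then show "bdd_above (varset \<Omega> \<mu> E)" by (intro bdd_aboveI) 
  have "finite {E}" "disjoint {E}" "{E} \<subseteq> sets \<Omega>" "\<Union>{E} = E" using E by (simp_all add: pairwise_def)
  then have "(\<Sum>F\<in>{E}. \<bar>\<mu> F\<bar>) \<in> varset \<Omega> \<mu> E"
    unfolding varset_def by blast
  then show "\<bar>\<mu> E\<bar> \<in> varset \<Omega> \<mu> E" by simp
  then show "varset \<Omega> \<mu> E \<noteq> {}" by blast
qed

lemma var_upper:
  assumes sm: "signed_measure \<Omega> \<mu>" and E: "E \<in> sets \<Omega>" and s: "s \<in> varset \<Omega> \<mu> E"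
  shows "s \<le> variation \<Omega> \<mu> E"
  unfolding variation_varset by (rule cSup_upper[OF s var_props(1)[OF sm E]])

lemma var_ge_abs:
  assumes sm: "signed_measure \<Omega> \<mu>" and E: "E \<in> sets \<Omega>"
  shows "\<bar>\<mu> E\<bar> \<le> variation \<Omega> \<mu> E"
  by (rule var_upper[OF sm E var_props(3)[OF sm E]])

lemma var_nonneg:
  assumes sm: "signed_measure \<Omega> \<mu>" and E: "E \<in> sets \<Omega>"
  shows "0 \<le> variation \<Omega> \<mu> E"
  using var_ge_abs[OF sm E] by linarith

lemma var_le:
  assumes sm: "signed_measure \<Omega> \<mu>" and E: "E \<in> sets \<Omega>"
    and C: "\<And>P. finite P \<Longrightarrow> disjoint P \<Longrightarrow> P \<subseteq> sets \<Omega> \<Longrightarrow> \<Union>P = E \<Longrightarrow> (\<Sum>F\<in>P. \<bar>\<mu> F\<bar>) \<le> C"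
  shows "variation \<Omega> \<mu> E \<le> C"
  unfolding variation_varset
proof (rule cSup_least[OF var_props(2)[OF sm E]])
  fix s assume "s \<in> varset \<Omega> \<mu> E"
  then obtain P where P: "finite P" "disjoint P" "P \<subseteq> sets \<Omega>" "\<Union>P = E" and s: "s = (\<Sum>F\<in>P. \<bar>\<mu> F\<bar>)"
    unfolding varset_def by blast
  show "s \<le> C" unfolding s by (rule C[OF P])
qed

lemma var_sub:
  assumes sm: "signed_measure \<Omega> \<mu>" and E: "E \<in> sets \<Omega>" and F: "F \<in> sets \<Omega>" and FE: "F \<subseteq> E"
  shows "\<bar>\<mu> F\<bar> \<le> variation \<Omega> \<mu> E"
proof (cases "F = E - F")
  case True
  then have "F = {}" by blast
  then show ?thesis using var_nonneg[OF sm E] sm_empty[OF sm] by simp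
next
  case False
  have EF: "E - F \<in> sets \<Omega>" using E F by auto
  have "(\<Sum>G\<in>{F, E - F}. \<bar>\<mu> G\<bar>) \<in> varset \<Omega> \<mu> E"
  proof -
    have "disjoint {F, E - F}" unfolding pairwise_def disjnt_def by blast
    moreover have "\<Union>{F, E - F} = E" using FE by blast
    moreover have "finite {F, E - F}" "{F, E - F} \<subseteq> sets \<Omega>" using F EF by simp_all
    ultimately show ?thesis unfolding varset_def by blast
  qed
  then have "(\<Sum>G\<in>{F, E - F}. \<bar>\<mu> G\<bar>) \<le> variation \<Omega> \<mu> E" by (rule var_upper[OF sm E])
  moreover have "(\<Sum>G\<in>{F, E - F}. \<bar>\<mu> G\<bar>) = \<bar>\<mu> F\<bar> + \<bar>\<mu> (E - F)\<bar>"
    using False by (simp add: sum.insert)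
  ultimately show ?thesis by linarith
qed

lemma sm_lin:
  assumes "signed_measure \<Omega> f" "signed_measure \<Omega> g"
  shows "signed_measure \<Omega> (\<lambda>E. a * f E + b * g E)"
  unfolding signed_measure_def
proof (intro allI impI)
  fix A :: "nat \<Rightarrow> _" assume "range A \<subseteq> sets \<Omega>" "disjoint_family A"
  then have "(\<lambda>n. f (A n)) sums f (\<Union>n. A n)" "(\<lambda>n. g (A n)) sums g (\<Union>n. A n)"
    using assms unfolding signed_measure_def by simp_all
  then show "(\<lambda>n. a * f (A n) + b * g (A n)) sums (a * f (\<Union>n. A n) + b * g (\<Union>n. A n))"
    by (intro sums_add sums_mult)
qed

lemma sm_scale:
  assumes "signed_measure \<Omega> f"
  shows "signed_measure \<Omega> (\<lambda>E. c * f E)"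
  using sm_lin[OF assms assms, of c 0] by simp

lemma var_scale:
  assumes sm: "signed_measure \<Omega> \<mu>" and E: "E \<in> sets \<Omega>" and c: "c > 0"
  shows "variation \<Omega> (\<lambda>F. c * \<mu> F) E = c * variation \<Omega> \<mu> E"
proof (rule antisym)
  have sm': "signed_measure \<Omega> (\<lambda>F. c * \<mu> F)" by (rule sm_scale[OF sm])
  show "variation \<Omega> (\<lambda>F. c * \<mu> F) E \<le> c * variation \<Omega> \<mu> E"
  proof (rule var_le[OF sm' E])
    fix P assume P: "finite P" "disjoint P" "P \<subseteq> sets \<Omega>" "\<Union>P = E"
    have "(\<Sum>F\<in>P. \<bar>\<mu> F\<bar>) \<le> variation \<Omega> \<mu> E"
      by (rule var_upper[OF sm E]) (unfold varset_def, use P in blast)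
    then have "c * (\<Sum>F\<in>P. \<bar>\<mu> F\<bar>) \<le> c * variation \<Omega> \<mu> E" using c by simp
    moreover have "(\<Sum>F\<in>P. \<bar>c * \<mu> F\<bar>) = c * (\<Sum>F\<in>P. \<bar>\<mu> F\<bar>)"
      using c by (simp add: abs_mult sum_distrib_left)
    ultimately show "(\<Sum>F\<in>P. \<bar>c * \<mu> F\<bar>) \<le> c * variation \<Omega> \<mu> E" by simp
  qed
  have "variation \<Omega> \<mu> E \<le> variation \<Omega> (\<lambda>F. c * \<mu> F) E / c"
  proof (rule var_le[OF sm E])
    fix P assume P: "finite P" "disjoint P" "P \<subseteq> sets \<Omega>" "\<Union>P = E"
    have "(\<Sum>F\<in>P. \<bar>c * \<mu> F\<bar>) \<le> variation \<Omega> (\<lambda>F. c * \<mu> F) E"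
      by (rule var_upper[OF sm' E]) (unfold varset_def, use P in blast)
    moreover have "(\<Sum>F\<in>P. \<bar>c * \<mu> F\<bar>) = c * (\<Sum>F\<in>P. \<bar>\<mu> F\<bar>)"
      using c by (simp add: abs_mult sum_distrib_left)
    ultimately show "(\<Sum>F\<in>P. \<bar>\<mu> F\<bar>) \<le> variation \<Omega> (\<lambda>F. c * \<mu> F) E / c"
      using c by (simp add: field_simps)
  qed
  then show "c * variation \<Omega> \<mu> E \<le> variation \<Omega> (\<lambda>F. c * \<mu> F) E"
    using c by (simp add: field_simps)
qed

lemma dual_neg: "x' \<in> dual \<Longrightarrow> (\<lambda>v. - x' v) \<in> dual"
  unfolding dual_def by (auto intro: linear_compose_neg continuous_on_minus)

lemma supp_mneg:
  assumes "x' \<in> dual" shows "supp x' (mneg N E) = supp (\<lambda>v. - x' v) (N E)"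
proof -
  have lin: "linear x'" using assms unfolding dual_def by simp
  have "x' ` uminus ` N E = (\<lambda>v. - x' v) ` N E"
    unfolding image_image using linear_neg[OF lin] by simp
  then show ?thesis unfolding supp_def mneg_def by simp
qed

lemma lc_sm:
  assumes "multimeasure \<Omega> M" "x' \<in> dual" "y' \<in> dual"
  shows "signed_measure \<Omega> (lc \<alpha> x' \<beta> y' M)"
proof -
  have "signed_measure \<Omega> (\<lambda>E. supp x' (M E))" "signed_measure \<Omega> (\<lambda>E. supp y' (M E))"
    using assms unfolding multimeasure_def by auto
  from sm_lin[OF this, of \<alpha> \<beta>] show ?thesis
    unfolding lc_def[abs_def] by simp
qed

lemma lc_mneg:
  assumes "x' \<in> dual" "y' \<in> dual"
  shows "lc \<alpha> x' \<beta> y' (mneg N) = lc \<alpha> (\<lambda>v. - x' v) \<beta> (\<lambda>v. - y' v) N"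
  unfolding lc_def[abs_def] supp_mneg[OF assms(1)] supp_mneg[OF assms(2)] ..

lemma lc_sm_neg:
  assumes "multimeasure \<Omega> N" "x' \<in> dual" "y' \<in> dual"
  shows "signed_measure \<Omega> (lc \<alpha> x' \<beta> y' (mneg N))"
  unfolding lc_mneg[OF assms(2,3)] by (rule lc_sm[OF assms(1) dual_neg dual_neg]) (use assms in auto)

lemma lc_scale: "lc (c * \<alpha>) x' (c * \<beta>) y' M = (\<lambda>E. c * lc \<alpha> x' \<beta> y' M E)"
  unfolding lc_def[abs_def] by (simp add: algebra_simps)

lemma caco_bound:
  assumes S: "\<forall>x\<in>S. \<bar>x\<bar> \<le> K" and u: "u \<in> caco S"
  shows "\<bar>u\<bar> \<le> K"
proof -
  have "{c * x | c x. \<bar>c\<bar> \<le> 1 \<and> x \<in> S} \<subseteq> cball 0 K"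
  proof
    fix z assume "z \<in> {c * x | c x. \<bar>c\<bar> \<le> 1 \<and> x \<in> S}"
    then obtain c x where z: "z = c * x" "\<bar>c\<bar> \<le> 1" "x \<in> S" by blast
    have "\<bar>c\<bar> * \<bar>x\<bar> \<le> 1 * \<bar>x\<bar>" using z(2) by (intro mult_right_mono) auto
    moreover have "\<bar>x\<bar> \<le> K" using S z(3) by blast
    ultimately have "\<bar>z\<bar> \<le> K" using z(1) by (simp add: abs_mult)
    then show "z \<in> cball 0 K" by (simp add: dist_real_def)
  qed
  then have "convex hull {c * x | c x. \<bar>c\<bar> \<le> 1 \<and> x \<in> S} \<subseteq> cball 0 K"
    by (intro hull_minimal) (auto simp: convex_cball)
  then have "caco S \<subseteq> cball 0 K" unfolding caco_def
    by (intro closure_minimal) auto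
  then show ?thesis using u by (auto simp: dist_real_def)
qed


lemma usd_usac:
  fixes M N :: "'a set \<Rightarrow> 'x::{real_vector,topological_space} set"
  assumes MM: "multimeasure \<Omega> M" and MN: "multimeasure \<Omega> N" and U: "usd \<Omega> M N"
  shows "usac \<Omega> M N"
proof -
  obtain c A where A: "A \<in> sets \<Omega>" and H: "\<forall>\<alpha> \<beta> (x'::'x\<Rightarrow>real) (y'::'x\<Rightarrow>real) E.
      x' \<in> dual \<longrightarrow> y' \<in> dual \<longrightarrow> E \<in> sets \<Omega> \<longrightarrow>
      variation \<Omega> (lc \<alpha> x' \<beta> y' M) E
        \<le> c * variation \<Omega> (lc \<alpha> x' \<beta> y' N) (E \<inter> A) + c * variation \<Omega> (lc \<alpha> x' \<beta> y' (mneg N)) (E \<inter> (space \<Omega> - A))"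
    using U unfolding usd_def by blast
  show ?thesis unfolding usac_def
  proof (intro bexI[OF _ A] allI impI)
    fix \<epsilon> :: real assume e: "\<epsilon> > 0"
    define \<delta> where "\<delta> = \<epsilon> / (\<bar>c\<bar> + 1)"
    have d: "\<delta> > 0" using e by (simp add: \<delta>_def add_pos_nonneg)
    have cd: "\<bar>c\<bar> * \<delta> \<le> \<epsilon>"
    proof -
      have "\<bar>c\<bar> * \<delta> = \<epsilon> * (\<bar>c\<bar> / (\<bar>c\<bar> + 1))" by (simp add: \<delta>_def)
      also have "\<dots> \<le> \<epsilon> * 1" using e by (intro mult_left_mono) auto
      finally show ?thesis by simp
    qed
    show "\<exists>\<delta>>0. \<forall>\<alpha> \<beta> (x'::'x\<Rightarrow>real) (y'::'x\<Rightarrow>real) E.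
      x' \<in> dual \<longrightarrow> y' \<in> dual \<longrightarrow> E \<in> sets \<Omega> \<longrightarrow>
      variation \<Omega> (lc \<alpha> x' \<beta> y' N) (E \<inter> A) + variation \<Omega> (lc \<alpha> x' \<beta> y' (mneg N)) (E \<inter> (space \<Omega> - A)) \<le> \<delta>
      \<longrightarrow> variation \<Omega> (lc \<alpha> x' \<beta> y' M) E \<le> \<epsilon>"
    proof (intro exI[of _ \<delta>] conjI d allI impI)
      fix \<alpha> \<beta> :: real and x' y' :: "'x \<Rightarrow> real" and E assume x: "x' \<in> dual" and y: "y' \<in> dual" and E: "E \<in> sets \<Omega>"
      assume le: "variation \<Omega> (lc \<alpha> x' \<beta> y' N) (E \<inter> A) + variation \<Omega> (lc \<alpha> x' \<beta> y' (mneg N)) (E \<inter> (space \<Omega> - A)) \<le> \<delta>"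
      define a where "a = variation \<Omega> (lc \<alpha> x' \<beta> y' N) (E \<inter> A)"
      define b where "b = variation \<Omega> (lc \<alpha> x' \<beta> y' (mneg N)) (E \<inter> (space \<Omega> - A))"
      have EA: "E \<inter> A \<in> sets \<Omega>" "E \<inter> (space \<Omega> - A) \<in> sets \<Omega>" using E A by auto
      have a0: "0 \<le> a" unfolding a_def by (rule var_nonneg[OF lc_sm[OF MN x y] EA(1)])
      have b0: "0 \<le> b" unfolding b_def by (rule var_nonneg[OF lc_sm_neg[OF MN x y] EA(2)])
      have "variation \<Omega> (lc \<alpha> x' \<beta> y' M) E \<le> c * a + c * b"
        using H x y E unfolding a_def b_def by blast
      also have "\<dots> = c * (a + b)" by (simp add: algebra_simps)
      also have "\<dots> \<le> \<bar>c\<bar> * (a + b)" using a0 b0 by (intro mult_right_mono) auto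
      also have "\<dots> \<le> \<bar>c\<bar> * \<delta>" using le unfolding a_def b_def by (intro mult_left_mono) auto
      also have "\<dots> \<le> \<epsilon>" by (rule cd)
      finally show "variation \<Omega> (lc \<alpha> x' \<beta> y' M) E \<le> \<epsilon>" .
    qed
  qed
qed

lemma usac_usd:
  fixes M N :: "'a set \<Rightarrow> 'x::{real_vector,topological_space} set"
  assumes MM: "multimeasure \<Omega> M" and MN: "multimeasure \<Omega> N" and U: "usac \<Omega> M N"
  shows "usd \<Omega> M N"
proof -
  obtain A where A: "A \<in> sets \<Omega>" and H: "\<forall>\<epsilon>>0. \<exists>\<delta>>0. \<forall>\<alpha> \<beta> (x'::'x\<Rightarrow>real) (y'::'x\<Rightarrow>real) E.
      x' \<in> dual \<longrightarrow> y' \<in> dual \<longrightarrow> E \<in> sets \<Omega> \<longrightarrow>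
      variation \<Omega> (lc \<alpha> x' \<beta> y' N) (E \<inter> A) + variation \<Omega> (lc \<alpha> x' \<beta> y' (mneg N)) (E \<inter> (space \<Omega> - A)) \<le> \<delta>
      \<longrightarrow> variation \<Omega> (lc \<alpha> x' \<beta> y' M) E \<le> \<epsilon>"
    using U unfolding usac_def by blast
  obtain \<delta> where d: "\<delta> > 0" and H1: "\<forall>\<alpha> \<beta> (x'::'x\<Rightarrow>real) (y'::'x\<Rightarrow>real) E.
      x' \<in> dual \<longrightarrow> y' \<in> dual \<longrightarrow> E \<in> sets \<Omega> \<longrightarrow>
      variation \<Omega> (lc \<alpha> x' \<beta> y' N) (E \<inter> A) + variation \<Omega> (lc \<alpha> x' \<beta> y' (mneg N)) (E \<inter> (space \<Omega> - A)) \<le> \<delta>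
      \<longrightarrow> variation \<Omega> (lc \<alpha> x' \<beta> y' M) E \<le> 1"
    using H[rule_format, of 1] by auto
  show ?thesis unfolding usd_def
  proof (intro exI[of _ "1 / \<delta>"] bexI[OF _ A] allI impI)
    fix \<alpha> \<beta> :: real and x' y' :: "'x \<Rightarrow> real" and E assume x: "x' \<in> dual" and y: "y' \<in> dual" and E: "E \<in> sets \<Omega>"
    have EA: "E \<inter> A \<in> sets \<Omega>" "E \<inter> (space \<Omega> - A) \<in> sets \<Omega>" using E A by auto
    define a where "a = variation \<Omega> (lc \<alpha> x' \<beta> y' N) (E \<inter> A)"
    define b where "b = variation \<Omega> (lc \<alpha> x' \<beta> y' (mneg N)) (E \<inter> (space \<Omega> - A))"
    define m where "m = variation \<Omega> (lc \<alpha> x' \<beta> y' M) E"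
    have smN: "signed_measure \<Omega> (lc \<alpha> x' \<beta> y' N)" by (rule lc_sm[OF MN x y])
    have smN': "signed_measure \<Omega> (lc \<alpha> x' \<beta> y' (mneg N))" by (rule lc_sm_neg[OF MN x y])
    have smM: "signed_measure \<Omega> (lc \<alpha> x' \<beta> y' M)" by (rule lc_sm[OF MM x y])
    have a0: "0 \<le> a" unfolding a_def by (rule var_nonneg[OF smN EA(1)])
    have b0: "0 \<le> b" unfolding b_def by (rule var_nonneg[OF smN' EA(2)])
    have key: "l * m \<le> 1" if l: "l > 0" "l * (a + b) \<le> \<delta>" for l
    proof -
      have "variation \<Omega> (lc (l * \<alpha>) x' (l * \<beta>) y' N) (E \<inter> A) = l * a"
        unfolding lc_scale a_def by (rule var_scale[OF smN EA(1) l(1)])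
      moreover have "variation \<Omega> (lc (l * \<alpha>) x' (l * \<beta>) y' (mneg N)) (E \<inter> (space \<Omega> - A)) = l * b"
        unfolding lc_scale b_def by (rule var_scale[OF smN' EA(2) l(1)])
      moreover have "variation \<Omega> (lc (l * \<alpha>) x' (l * \<beta>) y' M) E = l * m"
        unfolding lc_scale m_def by (rule var_scale[OF smM E l(1)])
      ultimately show ?thesis using H1[rule_format, OF x y E, of "l * \<alpha>" "l * \<beta>"] l(2)
        by (simp add: algebra_simps)
    qed
    have "m \<le> (a + b) / \<delta>"
    proof (cases "a + b > 0")
      case True
      have "(\<delta> / (a + b)) * m \<le> 1" using True d by (intro key) auto
      then show ?thesis using True d by (simp add: field_simps)
    next
      case False
      then have ab: "a + b = 0" using a0 b0 by linarith
      show ?thesis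
      proof (rule ccontr)
        assume "\<not> ?thesis"
        then have m0: "m > 0" using ab by simp
        have "(2 / m) * m \<le> 1" using m0 ab d by (intro key) auto
        then show False using m0 by simp
      qed
    qed
    then show "variation \<Omega> (lc \<alpha> x' \<beta> y' M) E
        \<le> 1 / \<delta> * variation \<Omega> (lc \<alpha> x' \<beta> y' N) (E \<inter> A) + 1 / \<delta> * variation \<Omega> (lc \<alpha> x' \<beta> y' (mneg N)) (E \<inter> (space \<Omega> - A))"
      unfolding a_def[symmetric] b_def[symmetric] m_def[symmetric] by (simp add: add_divide_distrib)
  qed
qed

lemma uss_usd:
  fixes M N :: "'a set \<Rightarrow> 'x::{real_vector,topological_space} set"
  assumes MM: "multimeasure \<Omega> M" and MN: "multimeasure \<Omega> N" and U: "uss \<Omega> M N"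
  shows "usd \<Omega> M N"
proof -
  obtain d A where d: "d \<ge> 0" and A: "A \<in> sets \<Omega>" and H: "\<forall>\<alpha> \<beta> (x'::'x\<Rightarrow>real) (y'::'x\<Rightarrow>real) E.
      x' \<in> dual \<longrightarrow> y' \<in> dual \<longrightarrow> E \<in> sets \<Omega> \<longrightarrow>
      lc \<alpha> x' \<beta> y' M E \<in>
        {d * u + d * v | u v.
           u \<in> caco {lc \<alpha> x' \<beta> y' N (F \<inter> A) | F. F \<in> sets \<Omega> \<and> F \<subseteq> E} \<and>
           v \<in> caco {lc \<alpha> x' \<beta> y' (mneg N) (F \<inter> (space \<Omega> - A)) | F. F \<in> sets \<Omega> \<and> F \<subseteq> E}}"
    using U unfolding uss_def by blast
  show ?thesis unfolding usd_def
  proof (intro exI[of _ "2 * d"] bexI[OF _ A] allI impI)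
    fix \<alpha> \<beta> :: real and x' y' :: "'x \<Rightarrow> real" and E assume x: "x' \<in> dual" and y: "y' \<in> dual" and E: "E \<in> sets \<Omega>"
    have EA: "E \<inter> A \<in> sets \<Omega>" "E \<inter> (space \<Omega> - A) \<in> sets \<Omega>" using E A by auto
    define K1 where "K1 = variation \<Omega> (lc \<alpha> x' \<beta> y' N) (E \<inter> A)"
    define K2 where "K2 = variation \<Omega> (lc \<alpha> x' \<beta> y' (mneg N)) (E \<inter> (space \<Omega> - A))"
    have smN: "signed_measure \<Omega> (lc \<alpha> x' \<beta> y' N)" by (rule lc_sm[OF MN x y])
    have smN': "signed_measure \<Omega> (lc \<alpha> x' \<beta> y' (mneg N))" by (rule lc_sm_neg[OF MN x y])
    have smM: "signed_measure \<Omega> (lc \<alpha> x' \<beta> y' M)" by (rule lc_sm[OF MM x y])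
    have bnd: "\<bar>lc \<alpha> x' \<beta> y' M G\<bar> \<le> d * K1 + d * K2" if G: "G \<in> sets \<Omega>" "G \<subseteq> E" for G
    proof -
      obtain u v where uv: "lc \<alpha> x' \<beta> y' M G = d * u + d * v"
        and u: "u \<in> caco {lc \<alpha> x' \<beta> y' N (F \<inter> A) | F. F \<in> sets \<Omega> \<and> F \<subseteq> G}"
        and v: "v \<in> caco {lc \<alpha> x' \<beta> y' (mneg N) (F \<inter> (space \<Omega> - A)) | F. F \<in> sets \<Omega> \<and> F \<subseteq> G}"
        using H[rule_format, OF x y G(1)] by blast
      have "\<forall>z\<in>{lc \<alpha> x' \<beta> y' N (F \<inter> A) | F. F \<in> sets \<Omega> \<and> F \<subseteq> G}. \<bar>z\<bar> \<le> K1"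
      proof
        fix z assume "z \<in> {lc \<alpha> x' \<beta> y' N (F \<inter> A) | F. F \<in> sets \<Omega> \<and> F \<subseteq> G}"
        then obtain F where F: "z = lc \<alpha> x' \<beta> y' N (F \<inter> A)" "F \<in> sets \<Omega>" "F \<subseteq> G" by blast
        have "F \<inter> A \<in> sets \<Omega>" "F \<inter> A \<subseteq> E \<inter> A" using F(2,3) A G(2) by auto
        then show "\<bar>z\<bar> \<le> K1" unfolding F(1) K1_def by (intro var_sub[OF smN EA(1)])
      qed
      then have u1: "\<bar>u\<bar> \<le> K1" by (rule caco_bound[OF _ u])
      have "\<forall>z\<in>{lc \<alpha> x' \<beta> y' (mneg N) (F \<inter> (space \<Omega> - A)) | F. F \<in> sets \<Omega> \<and> F \<subseteq> G}. \<bar>z\<bar> \<le> K2"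
      proof
        fix z assume "z \<in> {lc \<alpha> x' \<beta> y' (mneg N) (F \<inter> (space \<Omega> - A)) | F. F \<in> sets \<Omega> \<and> F \<subseteq> G}"
        then obtain F where F: "z = lc \<alpha> x' \<beta> y' (mneg N) (F \<inter> (space \<Omega> - A))" "F \<in> sets \<Omega>" "F \<subseteq> G" by blast
        have "F \<inter> (space \<Omega> - A) \<in> sets \<Omega>" "F \<inter> (space \<Omega> - A) \<subseteq> E \<inter> (space \<Omega> - A)" using F(2,3) A G(2) by auto
        then show "\<bar>z\<bar> \<le> K2" unfolding F(1) K2_def by (intro var_sub[OF smN' EA(2)])
      qed
      then have v1: "\<bar>v\<bar> \<le> K2" by (rule caco_bound[OF _ v])
      have "\<bar>lc \<alpha> x' \<beta> y' M G\<bar> \<le> \<bar>d * u\<bar> + \<bar>d * v\<bar>" unfolding uv by (rule abs_triangle_ineq)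
      also have "\<dots> = d * \<bar>u\<bar> + d * \<bar>v\<bar>" using d by (simp add: abs_mult)
      also have "\<dots> \<le> d * K1 + d * K2" using d u1 v1 by (intro add_mono mult_left_mono) auto
      finally show ?thesis .
    qed
    have "variation \<Omega> (lc \<alpha> x' \<beta> y' M) E \<le> 2 * (d * K1 + d * K2)"
    proof (rule var_le[OF smM E])
      fix P assume P: "finite P" "disjoint P" "P \<subseteq> sets \<Omega>" "\<Union>P = E"
      show "(\<Sum>F\<in>P. \<bar>lc \<alpha> x' \<beta> y' M F\<bar>) \<le> 2 * (d * K1 + d * K2)"
        by (rule part_bound[OF smM P(1-3)]) (use bnd P(4) in blast)
    qed
    then show "variation \<Omega> (lc \<alpha> x' \<beta> y' M) E
        \<le> 2 * d * variation \<Omega> (lc \<alpha> x' \<beta> y' N) (E \<inter> A) + 2 * d * variation \<Omega> (lc \<alpha> x' \<beta> y' (mneg N)) (E \<inter> (space \<Omega> - A))"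
      unfolding K1_def K2_def by (simp add: algebra_simps)
  qed
qed

theorem proposition4p3:
  fixes \<Omega> :: "'a measure"
    and M N :: "'a set \<Rightarrow> 'x::{real_vector,t2_space} set"
  assumes "lcs TYPE('x)"
    and "multimeasure \<Omega> M" and "multimeasure \<Omega> N"
  shows "(usac \<Omega> M N \<longleftrightarrow> usd \<Omega> M N) \<and> (uss \<Omega> M N \<longrightarrow> usd \<Omega> M N)"
  using usac_usd[OF assms(2,3)] usd_usac[OF assms(2,3)] uss_usd[OF assms(2,3)] by blast

end
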